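(* Let $\mathbf{C}$ be the Cantor set with a fixed compatible metric $\mathrm{dist}$, let $X \subset \mathbf{C}$, and let $f : X \to Y$ be a clopen-LC function from $X$ onto a separable metrizable space $Y$. Assume $f^{-1}(y)$ is compact for every $y \in Y$. For $n = 1,2,\dots$, let $X_n$ be the union of all fibers $f^{-1}(y)$, $y \in Y$, with the following property: there exist a sequence $y_k \to y$ in $Y$ with $y_k \neq y$ for all $k$ and $y_k \neq y_j$ for $k \neq j$, points $x_k \in f^{-1}(y_k)$, and a point $\tilde{x}_y \in \mathbf{C}$ such that $x_k \to \tilde{x}_y$ and $\mathrm{dist}(\tilde{x}_y, f^{-1}(y)) > 1/n$. Let $Y_n = f(X_n)$. Then the restriction $f|_{X_n} : X_n \to Y_n$ is an open function.
   Context: All spaces are separable metrizable. A subset of a topological space is an LC-set if it is the intersection of an open set and a closed set. A function is open if it maps open sets to open sets of its image space. A function $f : X \to Y$ is clopen-LC if for every subset $U \subset X$ that is clopen in $X$, the image $f(U)$ is an LC-set in $Y$. Note that $X_n = f^{-1}(Y_n)$ since $X_n$ is a union of fibers. *)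

theory Defs
  imports "HOL-Analysis.Analysis"
begin

definition cantor_set :: "real set" where
  "cantor_set = {x. \<exists>a::nat \<Rightarrow> nat. (\<forall>k. a k \<in> {0, 2}) \<and>
                      x = (\<Sum>k. real (a k) / 3 ^ Suc k)}"

definition LC_set :: "'a topology \<Rightarrow> 'a set \<Rightarrow> bool" where
  "LC_set T S \<longleftrightarrow> (\<exists>U V. openin T U \<and> closedin T V \<and> S = U \<inter> V)"

definition clopen_LC :: "'a topology \<Rightarrow> 'b topology \<Rightarrow> ('a \<Rightarrow> 'b) \<Rightarrow> bool" where
  "clopen_LC X Y f \<longleftrightarrow> (\<forall>U. closedin X U \<and> openin X U \<longrightarrow> LC_set Y (f ` U))"

definition dist_to_set :: "('a \<Rightarrow> 'a \<Rightarrow> real) \<Rightarrow> 'a \<Rightarrow> 'a set \<Rightarrow> real" where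
  "dist_to_set d x A = Inf ((\<lambda>z. d x z) ` A)"

definition X_n ::
  "real set \<Rightarrow> (real \<Rightarrow> real \<Rightarrow> real) \<Rightarrow> real set \<Rightarrow> 'b topology \<Rightarrow> (real \<Rightarrow> 'b) \<Rightarrow> nat \<Rightarrow> real set"
where
  "X_n C d X Y f n = \<Union> { {x \<in> X. f x = y} | y. y \<in> topspace Y \<and>
      (\<exists>yk :: nat \<Rightarrow> 'b. \<exists>xk :: nat \<Rightarrow> real. \<exists>x'.
          (\<forall>k. yk k \<in> topspace Y) \<and> limitin Y yk y sequentially \<and>
          (\<forall>k. yk k \<noteq> y) \<and> inj yk \<and>
          (\<forall>k. xk k \<in> X \<and> f (xk k) = yk k) \<and>
          x' \<in> C \<and> limitin (top_of_set C) xk x' sequentially \<and>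
          dist_to_set d x' {x \<in> X. f x = y} > 1 / real n) }"

end

theory Submission
  imports Defs
begin


definition tern :: "(nat \<Rightarrow> real) \<Rightarrow> real" where
  "tern a = (\<Sum>k. a k / 3 ^ Suc k)"

definition digs :: "(nat \<Rightarrow> real) set" where
  "digs = {a. \<forall>k. a k \<in> {0,2}}"

lemma summable_geo3: "summable (\<lambda>k. 2 / (3::real) ^ Suc k)"
proof -
  have "summable (\<lambda>k. (2/3) * (1/3::real) ^ k)"
    by (intro summable_mult summable_geometric) auto
  then show ?thesis by (simp add: power_divide field_simps)
qed

lemma sum_geo3: "(\<Sum>k. 2 / (3::real) ^ Suc k) = 1"
proof -
  have "(\<lambda>k. (2/3) * (1/3::real) ^ k) sums ((2/3) * (1 / (1 - 1/3)))"
    by (intro sums_mult geometric_sums) auto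
  then have "(\<lambda>k. 2 / (3::real) ^ Suc k) sums 1"
    by (simp add: power_divide field_simps)
  then show ?thesis by (simp add: sums_iff)
qed

lemma digs_bound: "a \<in> digs \<Longrightarrow> norm (a k / 3 ^ Suc k) \<le> 2 / (3::real) ^ Suc k"
  unfolding digs_def by (cases "a k = 0") auto

lemma summable_tern: "a \<in> digs \<Longrightarrow> summable (\<lambda>k. a k / 3 ^ Suc k)"
  by (rule summable_comparison_test[OF _ summable_geo3]) (metis digs_bound)

lemma digs_Suc: "a \<in> digs \<Longrightarrow> (\<lambda>i. a (Suc i)) \<in> digs"
  unfolding digs_def by auto

lemma digs_shift: "a \<in> digs \<Longrightarrow> (\<lambda>i. a (i + k)) \<in> digs"
  unfolding digs_def by auto

lemma tern_split: assumes "a \<in> digs" shows "tern a = a 0 / 3 + tern (\<lambda>i. a (Suc i)) / 3"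
proof -
  have s: "summable (\<lambda>k. a k / 3 ^ Suc k)" using summable_tern[OF assms] .
  have "tern a = (\<Sum>k. a (Suc k) / 3 ^ Suc (Suc k)) + a 0 / 3"
    unfolding tern_def using suminf_split_head[OF s] by simp
  also have "(\<Sum>k. a (Suc k) / 3 ^ Suc (Suc k)) = (\<Sum>k. (a (Suc k) / 3 ^ Suc k) / 3)"
    by (simp add: field_simps)
  also have "\<dots> = tern (\<lambda>i. a (Suc i)) / 3"
    unfolding tern_def by (rule suminf_divide[OF summable_tern[OF digs_Suc[OF assms]]])
  finally show ?thesis by simp
qed

lemma tern_nonneg: "a \<in> digs \<Longrightarrow> 0 \<le> tern a"
  unfolding tern_def
proof (rule suminf_nonneg[OF summable_tern])
  fix n assume "a \<in> digs"
  then have "a n = 0 \<or> a n = 2" by (auto simp: digs_def)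
  then show "0 \<le> a n / 3 ^ Suc n" by auto
qed simp

lemma tern_le1: "a \<in> digs \<Longrightarrow> tern a \<le> 1"
  unfolding tern_def
  apply (subst sum_geo3[symmetric])
  apply (rule suminf_le[OF _ summable_tern summable_geo3])
proof -
  fix n assume "a \<in> digs"
  then have "a n = 0 \<or> a n = 2" by (auto simp: digs_def)
  then show "a n / 3 ^ Suc n \<le> 2 / 3 ^ Suc n" by auto
qed

lemma tern_ranges: assumes "a \<in> digs"
  shows "tern a \<in> {0..1/3} \<union> {2/3..1}"
proof -
  have b: "0 \<le> tern (\<lambda>i. a (Suc i))" "tern (\<lambda>i. a (Suc i)) \<le> 1"
    using tern_nonneg tern_le1 digs_Suc[OF assms] by auto
  from assms have "a 0 = 0 \<or> a 0 = 2" by (auto simp: digs_def)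
  then show ?thesis using b tern_split[OF assms] by auto
qed

lemma tern_shift: assumes "a \<in> digs"
  shows "\<exists>N::int. 3 ^ k * tern a = N + tern (\<lambda>i. a (i + k))"
proof (induction k)
  case 0 then show ?case by (intro exI[of _ 0]) simp
next
  case (Suc k)
  then obtain N :: int where N: "3 ^ k * tern a = N + tern (\<lambda>i. a (i + k))" by blast
  have d: "(\<lambda>i. a (i + k)) \<in> digs" using digs_shift[OF assms] .
  have "a k = 0 \<or> a k = 2" using assms by (auto simp: digs_def)
  then obtain m :: int where m: "a k = m" by (metis of_int_0 of_int_numeral)
  have "3 ^ Suc k * tern a = 3 * N + 3 * tern (\<lambda>i. a (i + k))" using N by simp
  also have "3 * tern (\<lambda>i. a (i + k)) = a k + tern (\<lambda>i. a (i + Suc k))"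
    using tern_split[OF d] by simp
  finally have "3 ^ Suc k * tern a = (3 * N + m) + tern (\<lambda>i. a (i + Suc k))" using m by simp
  then show ?case by blast
qed

lemma cantor_set_eq: "cantor_set = tern ` digs"
proof
  show "cantor_set \<subseteq> tern ` digs"
  proof
    fix x assume "x \<in> cantor_set"
    then obtain a :: "nat \<Rightarrow> nat" where a: "\<forall>k. a k \<in> {0,2}" "x = (\<Sum>k. real (a k) / 3 ^ Suc k)"
      unfolding cantor_set_def by blast
    have "(\<lambda>k. real (a k)) \<in> digs" using a(1) by (auto simp: digs_def)
    moreover have "x = tern (\<lambda>k. real (a k))" using a(2) by (simp add: tern_def)
    ultimately show "x \<in> tern ` digs" by blast
  qed
next
  show "tern ` digs \<subseteq> cantor_set"
  proof
    fix x assume "x \<in> tern ` digs"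
    then obtain b where b: "b \<in> digs" "x = tern b" by blast
    define a where "a k = (if b k = 0 then 0 else (2::nat))" for k
    have "\<forall>k. real (a k) = b k" using b(1) by (auto simp: digs_def a_def)
    then have "x = (\<Sum>k. real (a k) / 3 ^ Suc k)" using b(2) by (simp add: tern_def)
    moreover have "\<forall>k. a k \<in> {0,2}" by (simp add: a_def)
    ultimately show "x \<in> cantor_set" unfolding cantor_set_def by blast
  qed
qed

lemma not_in_cantor: "(M + 1/2) / 3 ^ k \<notin> cantor_set" for M :: int
proof
  assume "(M + 1/2) / 3 ^ k \<in> cantor_set"
  then obtain a where a: "a \<in> digs" "tern a = (M + 1/2) / 3 ^ k" using cantor_set_eq by (metis imageE)
  obtain N :: int where N: "3 ^ k * tern a = N + tern (\<lambda>i. a (i + k))" using tern_shift[OF a(1)] by blast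
  have r: "tern (\<lambda>i. a (i + k)) \<in> {0..1/3} \<union> {2/3..1}" using tern_ranges digs_shift[OF a(1)] by blast
  have "tern (\<lambda>i. a (i + k)) = of_int (M - N) + 1/2" using N a(2) by simp
  with r have "of_int (M - N) \<in> {-1/2..(-1/6::real)} \<union> {1/6..1/2}" by auto
  then have "of_int (M - N) > (-1::real)" "of_int (M - N) < (1::real)" "of_int (M - N) \<noteq> (0::real)" by auto
  then have "M - N > -1" "M - N < 1" "M - N \<noteq> 0" by linarith+
  then show False by linarith
qed

lemma gap_right: assumes "e > 0" shows "\<exists>c. z < c \<and> c < z + e \<and> c \<notin> cantor_set"
proof -
  obtain k where k: "(1/3::real) ^ k < e / 2" using real_arch_pow_inv[of "e/2" "1/3"] assms by auto
  define w where "w = (3::real) ^ k * z"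
  define c where "c = (of_int (floor w + 1) + 1/2) / (3::real) ^ k"
  have p: "(0::real) < 3 ^ k" by simp
  have "z < c" unfolding c_def w_def using p by (simp add: field_simps) linarith
  moreover have "c < z + e"
  proof -
    have "c - z = (of_int (floor w) + 3/2 - w) / 3 ^ k" unfolding c_def w_def using p by (simp add: field_simps)
    also have "\<dots> < 2 / 3 ^ k" using p by (intro divide_strict_right_mono) linarith+
    also have "\<dots> < e" using k by (simp add: power_divide field_simps)
    finally show ?thesis by simp
  qed
  moreover have "c \<notin> cantor_set" unfolding c_def using not_in_cantor[of "floor w + 1" k] by simp
  ultimately show ?thesis by blast
qed

lemma gap_left: assumes "e > 0" shows "\<exists>c. z - e < c \<and> c < z \<and> c \<notin> cantor_set"
proof -
  obtain k where k: "(1/3::real) ^ k < e / 2" using real_arch_pow_inv[of "e/2" "1/3"] assms by auto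
  define w where "w = (3::real) ^ k * z"
  define c where "c = (of_int (floor w - 1) + 1/2) / (3::real) ^ k"
  have p: "(0::real) < 3 ^ k" by simp
  have "c < z" unfolding c_def w_def using p by (simp add: field_simps) linarith
  moreover have "z - e < c"
  proof -
    have "z - c = (w - of_int (floor w) + 1/2) / 3 ^ k" unfolding c_def w_def using p by (simp add: field_simps)
    also have "\<dots> < 2 / 3 ^ k" using p by (intro divide_strict_right_mono) linarith+
    also have "\<dots> < e" using k by (simp add: power_divide field_simps)
    finally show ?thesis by simp
  qed
  moreover have "c \<notin> cantor_set" unfolding c_def using not_in_cantor[of "floor w - 1" k] by simp
  ultimately show ?thesis by blast
qed



lemma digs_PiE: "digs = PiE UNIV (\<lambda>_. {0,2::real})"
  unfolding digs_def by (auto simp: PiE_iff)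

lemma compact_digs: "compact digs"
proof -
  have "compactin (product_topology (\<lambda>_. euclidean) UNIV) (PiE UNIV (\<lambda>_. {0,2::real}))"
    by (subst compactin_PiE) auto
  then show ?thesis unfolding digs_PiE euclidean_product_topology by simp
qed

lemma continuous_tern: "continuous_on digs tern"
proof -
  have u: "uniform_limit digs (\<lambda>n a. \<Sum>i<n. a i / 3 ^ Suc i) (\<lambda>a. suminf (\<lambda>i. a i / 3 ^ Suc i)) sequentially"
    by (rule Weierstrass_m_test[OF digs_bound summable_geo3])
  have "\<forall>\<^sub>F n in sequentially. continuous_on digs (\<lambda>a. \<Sum>i<n. a i / 3 ^ Suc i :: real)"
  proof (intro always_eventually allI continuous_on_sum continuous_on_divide continuous_on_const)
    fix n i
    show "continuous_on digs (\<lambda>a. a i :: real)"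
      by (rule continuous_on_subset[OF continuous_on_product_coordinates]) simp
  qed simp
  from uniform_limit_theorem[OF this u] show ?thesis unfolding tern_def[abs_def] by simp
qed

lemma compact_cantor: "compact cantor_set"
  unfolding cantor_set_eq by (rule compact_continuous_image[OF continuous_tern compact_digs])



theorem lemma1:
  fixes d :: "real \<Rightarrow> real \<Rightarrow> real"
    and X :: "real set"
    and Y :: "'b topology"
    and f :: "real \<Rightarrow> 'b"
    and n :: nat
  assumes metric: "Metric_space cantor_set d"
    and compatible: "Metric_space.mtopology cantor_set d = top_of_set cantor_set"
    and XC: "X \<subseteq> cantor_set"
    and Ysep: "separable_space Y"
    and Ymet: "metrizable_space Y"
    and onto: "f ` X = topspace Y"
    and cLC: "clopen_LC (top_of_set X) Y f"
    and fibres: "\<And>y. y \<in> topspace Y \<Longrightarrow> compactin (top_of_set X) {x \<in> X. f x = y}"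
    and n: "n \<ge> 1"
  shows "open_map (top_of_set (X_n cantor_set d X Y f n))
                  (subtopology Y (f ` X_n cantor_set d X Y f n)) f"
proof -
  define C where "C = cantor_set"
  define XN where "XN = X_n cantor_set d X Y f n"
  define qual where "qual y \<longleftrightarrow> y \<in> topspace Y \<and>
      (\<exists>yk :: nat \<Rightarrow> 'b. \<exists>xk :: nat \<Rightarrow> real. \<exists>x'.
          (\<forall>k. yk k \<in> topspace Y) \<and> limitin Y yk y sequentially \<and>
          (\<forall>k. yk k \<noteq> y) \<and> inj yk \<and>
          (\<forall>k. xk k \<in> X \<and> f (xk k) = yk k) \<and>
          x' \<in> C \<and> limitin (top_of_set C) xk x' sequentially \<and>
          dist_to_set d x' {x \<in> X. f x = y} > 1 / real n)" for y
  have XN_iff: "z \<in> XN \<longleftrightarrow> z \<in> X \<and> qual (f z)" for z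
    unfolding XN_def X_n_def qual_def C_def by blast
  interpret M: Metric_space C d using metric C_def by simp
  have compat: "M.mtopology = top_of_set C" using compatible C_def by simp
  have XC': "X \<subseteq> C" using XC C_def by simp
  obtain MY rho where MY: "Metric_space MY rho" and Yeq: "Y = Metric_space.mtopology MY rho"
    using Ymet unfolding metrizable_space_def by blast
  interpret MY: Metric_space MY rho by (rule MY)
  have topY: "topspace Y = MY" using Yeq by simp
  have npos: "real n > 0" using n by simp
  show ?thesis
    unfolding XN_def[symmetric] open_map_def
  proof (intro allI impI)
    fix U assume "openin (top_of_set XN) U"
    then obtain V where V: "open V" "U = XN \<inter> V" by (auto simp: openin_open)
    show "openin (subtopology Y (f ` XN)) (f ` U)"
      unfolding openin_subopen[of _ "f ` U"]
    proof
      fix y assume "y \<in> f ` U"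
      then obtain x where x: "x \<in> U" "y = f x" by blast
      have xX: "x \<in> X" using x V XN_iff by auto
      have yM: "y \<in> MY" using xX x onto topY by auto
      obtain eps where eps: "eps > 0" "ball x eps \<subseteq> V" using V x open_contains_ball by blast
      obtain a where a: "x - eps < a" "a < x" "a \<notin> C" using gap_left[OF eps(1)] C_def by blast
      obtain b where b: "x < b" "b < x + eps" "b \<notin> C" using gap_right[OF eps(1)] C_def by blast
      have abV: "{a..b} \<subseteq> V"
      proof
        fix t assume "t \<in> {a..b}"
        then have "t \<in> ball x eps" using a b by (auto simp: dist_real_def)
        then show "t \<in> V" using eps by auto
      qed
      show "\<exists>T. openin (subtopology Y (f ` XN)) T \<and> y \<in> T \<and> T \<subseteq> f ` U"
      proof (rule ccontr)
        assume H: "\<not> ?thesis"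
        have "\<forall>j. \<exists>y'. y' \<in> MY \<and> rho y y' < 1 / Suc j \<and> y' \<in> f ` XN \<and> y' \<notin> f ` U"
        proof
          fix j
          have "openin (subtopology Y (f ` XN)) (MY.mball y (1 / Suc j) \<inter> f ` XN)"
            using Yeq by (auto simp: openin_subtopology)
          moreover have "y \<in> MY.mball y (1 / Suc j) \<inter> f ` XN" using yM x V by auto
          ultimately have "\<not> (MY.mball y (1 / Suc j) \<inter> f ` XN \<subseteq> f ` U)" using H by blast
          then show "\<exists>y'. y' \<in> MY \<and> rho y y' < 1 / Suc j \<and> y' \<in> f ` XN \<and> y' \<notin> f ` U" by auto
        qed
        then have "\<exists>ys. \<forall>j. ys j \<in> MY \<and> rho y (ys j) < 1 / Suc j \<and> ys j \<in> f ` XN \<and> ys j \<notin> f ` U"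
          by (rule choice)
        then obtain ys where ys0: "\<forall>j. ys j \<in> MY \<and> rho y (ys j) < 1 / Suc j \<and> ys j \<in> f ` XN \<and> ys j \<notin> f ` U"
          by blast
        then have ys: "\<And>j. ys j \<in> MY" "\<And>j. rho y (ys j) < 1 / Suc j"
             "\<And>j. ys j \<in> f ` XN" "\<And>j. ys j \<notin> f ` U" by auto
        have ylim: "limitin Y ys y sequentially"
          unfolding Yeq MY.limitin_metric
        proof (intro conjI allI impI yM)
          fix e :: real assume "e > 0"
          then obtain N where N: "1 / Suc N < e" using nat_approx_posE by blast
          show "\<forall>\<^sub>F j in sequentially. ys j \<in> MY \<and> rho (ys j) y < e"
            unfolding eventually_sequentially
          proof (intro exI allI impI)
            fix j assume "N \<le> j"
            then have "1 / real (Suc j) \<le> 1 / Suc N" by (intro divide_left_mono) auto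
            then show "ys j \<in> MY \<and> rho (ys j) y < e"
              using ys(1,2)[of j] N MY.commute[of y "ys j"] yM by auto
          qed
        qed
        have qys: "qual (ys j)" for j using ys(3)[of j] XN_iff by auto
        have "\<forall>j. \<exists>yk xk x'. 
          (\<forall>k. yk k \<in> topspace Y) \<and> limitin Y yk (ys j) sequentially \<and>
          (\<forall>k. xk k \<in> X \<and> f (xk k) = yk k) \<and>
          x' \<in> C \<and> limitin (top_of_set C) xk x' sequentially \<and>
          dist_to_set d x' {x \<in> X. f x = ys j} > 1 / real n"
          using qys unfolding qual_def by blast
        then have "\<exists>YK. \<forall>j. \<exists>xk x'. 
          (\<forall>k. YK j k \<in> topspace Y) \<and> limitin Y (YK j) (ys j) sequentially \<and>
          (\<forall>k. xk k \<in> X \<and> f (xk k) = YK j k) \<and>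
          x' \<in> C \<and> limitin (top_of_set C) xk x' sequentially \<and>
          dist_to_set d x' {x \<in> X. f x = ys j} > 1 / real n" by (rule choice)
        then obtain YK where "\<forall>j. \<exists>xk x'. 
          (\<forall>k. YK j k \<in> topspace Y) \<and> limitin Y (YK j) (ys j) sequentially \<and>
          (\<forall>k. xk k \<in> X \<and> f (xk k) = YK j k) \<and>
          x' \<in> C \<and> limitin (top_of_set C) xk x' sequentially \<and>
          dist_to_set d x' {x \<in> X. f x = ys j} > 1 / real n" by blast
        then have "\<exists>XK. \<forall>j. \<exists>x'. 
          (\<forall>k. YK j k \<in> topspace Y) \<and> limitin Y (YK j) (ys j) sequentially \<and>
          (\<forall>k. XK j k \<in> X \<and> f (XK j k) = YK j k) \<and>
          x' \<in> C \<and> limitin (top_of_set C) (XK j) x' sequentially \<and>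
          dist_to_set d x' {x \<in> X. f x = ys j} > 1 / real n" by (rule choice)
        then obtain XK where "\<forall>j. \<exists>x'. 
          (\<forall>k. YK j k \<in> topspace Y) \<and> limitin Y (YK j) (ys j) sequentially \<and>
          (\<forall>k. XK j k \<in> X \<and> f (XK j k) = YK j k) \<and>
          x' \<in> C \<and> limitin (top_of_set C) (XK j) x' sequentially \<and>
          dist_to_set d x' {x \<in> X. f x = ys j} > 1 / real n" by blast
        then have "\<exists>T. \<forall>j. 
          (\<forall>k. YK j k \<in> topspace Y) \<and> limitin Y (YK j) (ys j) sequentially \<and>
          (\<forall>k. XK j k \<in> X \<and> f (XK j k) = YK j k) \<and>
          T j \<in> C \<and> limitin (top_of_set C) (XK j) (T j) sequentially \<and>
          dist_to_set d (T j) {x \<in> X. f x = ys j} > 1 / real n" by (rule choice)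
        then obtain YK XK T where W: "\<And>j k. YK j k \<in> topspace Y" "\<And>j. limitin Y (YK j) (ys j) sequentially"
          "\<And>j k. XK j k \<in> X" "\<And>j k. f (XK j k) = YK j k" "\<And>j. T j \<in> C"
          "\<And>j. limitin (top_of_set C) (XK j) (T j) sequentially"
          "\<And>j. dist_to_set d (T j) {x \<in> X. f x = ys j} > 1 / real n"
          by blast
        have avoidB: "z \<notin> {a..b}" if "z \<in> X" "f z = ys j" for z j
        proof
          assume "z \<in> {a..b}"
          then have "z \<in> U" using that qys[of j] XN_iff V abV by auto
          then have "f z \<in> f ` U" by (rule imageI)
          then show False using ys(4)[of j] that by simp
        qed
        have far: "d (T j) z > 1 / real n" if "z \<in> X" "f z = ys j" for z j
        proof -
          have "bdd_below ((\<lambda>z. d (T j) z) ` {x \<in> X. f x = ys j})"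
            using W(5) XC' by (intro bdd_belowI[of _ 0]) (auto intro: M.nonneg)
          then have "Inf ((\<lambda>z. d (T j) z) ` {x \<in> X. f x = ys j}) \<le> d (T j) z"
            using that by (intro cInf_lower) auto
          then show ?thesis using W(7)[of j] unfolding dist_to_set_def by simp
        qed
        have "seq_compact C" using compact_cantor C_def compact_imp_seq_compact by simp
        then obtain r \<sigma> where r: "r \<in> C" "strict_mono \<sigma>" "(T \<circ> \<sigma>) \<longlonglongrightarrow> r"
          using W(5) seq_compactE by metis
        have "limitin M.mtopology (T \<circ> \<sigma>) r sequentially"
          unfolding compat using r W(5) by (simp add: limitin_subtopology)
        then have dlim: "\<forall>\<^sub>F j in sequentially. d (T (\<sigma> j)) r < 1 / (2 * real n)"
        proof -
          assume "limitin M.mtopology (T \<circ> \<sigma>) r sequentially"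
          then have "\<forall>\<^sub>F j in sequentially. T (\<sigma> j) \<in> C \<and> d (T (\<sigma> j)) r < 1 / (2 * real n)"
            unfolding M.limitin_metric using npos by simp
          then show ?thesis by (rule eventually_mono) simp
        qed
        have "openin (top_of_set C) (M.mball r (1 / (2 * real n)))"
          using M.openin_mball compat by metis
        then obtain W0 where W0: "open W0" "M.mball r (1 / (2 * real n)) = C \<inter> W0"
          by (auto simp: openin_open)
        have "r \<in> W0" using W0 r npos by auto
        then obtain eps2 where eps2: "eps2 > 0" "ball r eps2 \<subseteq> W0" using W0 open_contains_ball by blast
        obtain c where c: "r - eps2 < c" "c < r" "c \<notin> C" using gap_left[OF eps2(1)] C_def by blast
        obtain e where e: "r < e" "e < r + eps2" "e \<notin> C" using gap_right[OF eps2(1)] C_def by blast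
        have ceball: "d r t < 1 / (2 * real n)" if "t \<in> C" "t \<in> {c..e}" for t
        proof -
          have "t \<in> ball r eps2" using that c e by (auto simp: dist_real_def)
          then have "t \<in> W0" using eps2(2) by auto
          then have "t \<in> M.mball r (1 / (2 * real n))" using W0 that by auto
          then show ?thesis by simp
        qed
        define U' where "U' = X \<inter> ({a..b} \<union> {c..e})"
        have "closedin (top_of_set X) U'" unfolding U'_def by (auto simp: closedin_closed intro!: exI[of _ "{a..b} \<union> {c..e}"])
        moreover have "openin (top_of_set X) U'"
        proof -
          have nX: "a \<notin> X" "b \<notin> X" "c \<notin> X" "e \<notin> X" using a(3) b(3) c(3) e(3) XC' by auto
          have "U' = X \<inter> ({a<..<b} \<union> {c<..<e})"
          proof (rule set_eqI)
            fix t
            show "t \<in> U' \<longleftrightarrow> t \<in> X \<inter> ({a<..<b} \<union> {c<..<e})"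
            proof (cases "t \<in> X")
              case True
              then have "t \<noteq> a" "t \<noteq> b" "t \<noteq> c" "t \<noteq> e" using nX by auto
              then show ?thesis unfolding U'_def using True by auto
            qed (simp add: U'_def)
          qed
          then show ?thesis by (auto simp: openin_open intro!: exI[of _ "{a<..<b} \<union> {c<..<e}"])
        qed
        ultimately have "LC_set Y (f ` U')" using cLC unfolding clopen_LC_def by blast
        then obtain Op Fc where OF: "openin Y Op" "closedin Y Fc" "f ` U' = Op \<inter> Fc" unfolding LC_set_def by blast
        have "y \<in> f ` U'" using x xX a b unfolding U'_def by auto
        then have "y \<in> Op" using OF by auto
        then have evO: "\<forall>\<^sub>F j in sequentially. ys (\<sigma> j) \<in> Op"
          using ylim OF(1) r(2) unfolding limitin_def by (auto intro: eventually_subseq)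
        have evT: "\<forall>\<^sub>F j in sequentially. T (\<sigma> j) \<in> {c<..<e}"
          using r(3) c e unfolding tendsto_def by (auto simp: comp_def)
        obtain j where j: "ys (\<sigma> j) \<in> Op" "T (\<sigma> j) \<in> {c<..<e}" "d (T (\<sigma> j)) r < 1 / (2 * real n)"
          using eventually_happens'[OF _ eventually_conj[OF evO eventually_conj[OF evT dlim]]] by auto
        define i where "i = \<sigma> j"
        have notin: "ys i \<notin> f ` U'"
        proof
          assume "ys i \<in> f ` U'"
          then obtain z where z: "z \<in> U'" "f z = ys i" by auto
          have zX: "z \<in> X" using z U'_def by auto
          then have "z \<in> {c..e}" using avoidB[OF zX z(2)] z(1) U'_def by auto
          then have drz: "d r z < 1 / (2 * real n)" using ceball zX XC' by auto
          have "d (T i) z \<le> d (T i) r + d r z" using M.triangle W(5)[of i] r(1) zX XC' by auto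
          also have "\<dots> < 1 / real n" using drz j(3) unfolding i_def by (simp add: field_simps)
          finally show False using far[OF zX z(2)] by simp
        qed
        have "ys i \<in> Fc"
        proof (rule limitin_closedin[OF W(2)[of i] OF(2)])
          have "(XK i \<longlongrightarrow> T i) sequentially" using W(6)[of i] by (simp add: limitin_subtopology)
          then have "\<forall>\<^sub>F k in sequentially. XK i k \<in> {c<..<e}"
            using j(2) unfolding i_def tendsto_def by auto
          then show "\<forall>\<^sub>F k in sequentially. YK i k \<in> Fc"
          proof (rule eventually_mono)
            fix k assume "XK i k \<in> {c<..<e}"
            then have "XK i k \<in> U'" using W(3) unfolding U'_def by auto
            then show "YK i k \<in> Fc" using W(4)[of i k] OF(3) by force
          qed
        qed simp
        then show False using notin j(1) OF(3) unfolding i_def by auto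
      qed
    qed
  qed
qed

end
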